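(* Let $d\ge 1$, let $\mathcal{O}=\{u_1,\dots,u_k\}$ be a set of $k\ge 1$ distinct unit vectors in $\mathbb{R}^d$, and let $\mathcal{C}_{\mathcal{O}}$ be the family of convex polyhedra defined by $\mathcal{O}$. Let $P\subset\mathbb{R}^d$ be a finite set of $n\ge 1$ points. Then there exists a point $p\in P$ such that $p\in C$ for every $C\in\mathcal{C}_{\mathcal{O}}$ with $|C\cap P|>(1-\frac{1}{k})n$.
   Context: For a unit vector $u\in\mathbb{R}^d$ and $t\in\mathbb{R}$, the closed halfspace $\{x\in\mathbb{R}^d:\langle u,x\rangle\le t\}$ is said to have orientation (outward normal) $u$. The family of convex polyhedra defined by $\mathcal{O}$, denoted $\mathcal{C}_{\mathcal{O}}$, is the family of all sets of the form $H_1\cap\dots\cap H_m$ ($m\ge 0$ finite; the empty intersection is $\mathbb{R}^d$), where each $H_j$ is a closed halfspace whose orientation belongs to $\mathcal{O}$. *)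

theory Defs
  imports "HOL-Analysis.Analysis"
begin

definition halfspace_with :: "'a::euclidean_space \<Rightarrow> real \<Rightarrow> 'a set" where
  "halfspace_with u t = {x. inner u x \<le> t}"

text \<open>The family of convex polyhedra defined by a set of orientations Ors:
  all finite intersections (including the empty one, which is UNIV)
  of closed halfspaces whose orientation lies in Ors.\<close>
definition polyhedra_family :: "'a::euclidean_space set \<Rightarrow> 'a set set" where
  "polyhedra_family Ors = {C. \<exists>H. finite H \<and>
      (\<forall>h\<in>H. \<exists>u\<in>Ors. \<exists>t. h = halfspace_with u t) \<and> C = \<Inter>H}"

end

theory Submission
  imports Defs
begin

lemma threshold_exists:
  fixes u :: "'a::euclidean_space" and P :: "'a set" and thr :: real
  assumes "finite P" and "thr < real (card P)" and "0 \<le> thr"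
  shows "\<exists>t. real (card {x\<in>P. inner u x \<le> t}) > thr \<and>
     (\<forall>s. real (card {x\<in>P. inner u x \<le> s}) > thr \<longrightarrow> t \<le> s)"
proof -
  define S where "S = {q\<in>P. real (card {x\<in>P. inner u x \<le> inner u q}) > thr}"
  have key: "\<exists>q\<in>S. inner u q \<le> s" if hs: "real (card {x\<in>P. inner u x \<le> s}) > thr" for s
  proof -
    define A where "A = {x\<in>P. inner u x \<le> s}"
    have fA: "finite A" using assms(1) by (simp add: A_def)
    have "A \<noteq> {}"
    proof
      assume "A = {}"
      then have e: "{x\<in>P. inner u x \<le> s} = {}" by (simp add: A_def)
      have c0: "card {x\<in>P. inner u x \<le> s} = 0" unfolding e by (rule card.empty)
      have "real (card {x\<in>P. inner u x \<le> s}) = 0" by (simp only: c0 of_nat_0)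
      then show False using hs assms(3) by linarith
    qed
    then have mi: "Max (inner u ` A) \<in> inner u ` A" using fA by (intro Max_in) auto
    then obtain q where qA: "q \<in> A" and qq: "inner u q = Max (inner u ` A)" by force
    have qmax: "\<forall>x\<in>A. inner u x \<le> inner u q"
      unfolding qq using fA by (intro ballI Max_ge) auto
    have eq: "{x\<in>P. inner u x \<le> inner u q} = A"
      using qA qmax by (auto simp: A_def)
    have "q \<in> S" using qA hs eq by (simp add: S_def A_def)
    moreover have "inner u q \<le> s" using qA by (simp add: A_def)
    ultimately show ?thesis by blast
  qed
  have "real (card {x\<in>P. inner u x \<le> Max (inner u ` P)}) > thr"
  proof -
    have "P \<noteq> {}"
    proof
      assume "P = {}"
      then have "real (card P) = 0" by simp
      then show False using assms(2,3) by linarith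
    qed
    then have "{x\<in>P. inner u x \<le> Max (inner u ` P)} = P" using assms(1) by auto
    then show ?thesis using assms(2) by simp
  qed
  then obtain q0 where "q0 \<in> S" using key by blast
  then have neS: "S \<noteq> {}" by blast
  have fS: "finite S" using assms(1) by (simp add: S_def)
  define t where "t = Min (inner u ` S)"
  have "t \<in> inner u ` S" unfolding t_def using fS neS by (intro Min_in) auto
  then obtain q where qS: "q \<in> S" and tq: "t = inner u q" by blast
  have 1: "real (card {x\<in>P. inner u x \<le> t}) > thr" using qS tq by (simp add: S_def)
  have 2: "t \<le> s" if hs2: "real (card {x\<in>P. inner u x \<le> s}) > thr" for s
  proof -
    obtain q' where "q' \<in> S" "inner u q' \<le> s" using key[OF hs2] by blast
    then have "t \<le> inner u q'" unfolding t_def using fS by (intro Min_le) auto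
    then show ?thesis using \<open>inner u q' \<le> s\<close> by linarith
  qed
  show ?thesis using 1 2 by blast
qed

theorem theorem1:
  fixes Ors :: "'a::euclidean_space set" and P :: "'a set" and k n :: nat
  assumes "finite Ors" and "card Ors = k" and "k \<ge> 1"
    and "\<forall>u\<in>Ors. norm u = 1"
    and "finite P" and "card P = n" and "n \<ge> 1"
  shows "\<exists>p\<in>P. \<forall>C\<in>polyhedra_family Ors.
           real (card (C \<inter> P)) > (1 - 1 / real k) * real n \<longrightarrow> p \<in> C"
proof -
  define thr where "thr = (1 - 1 / real k) * real n"
  have kpos: "real k \<ge> 1" using assms(3) by simp
  have npos: "real n \<ge> 1" using assms(7) by simp
  have "real n / real k > 0" using kpos npos by simp
  then have thrlt: "thr < real (card P)"
    unfolding thr_def assms(6)[symmetric] by (simp add: algebra_simps)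
  have thrge: "0 \<le> thr"
  proof -
    have "1 / real k \<le> 1" using kpos by simp
    then have "0 \<le> 1 - 1 / real k" by linarith
    then show ?thesis unfolding thr_def using of_nat_0_le_iff by (rule mult_nonneg_nonneg)
  qed
  have "\<forall>u. \<exists>t. real (card {x\<in>P. inner u x \<le> t}) > thr \<and>
     (\<forall>s. real (card {x\<in>P. inner u x \<le> s}) > thr \<longrightarrow> t \<le> s)"
    using threshold_exists[OF assms(5) thrlt thrge] by blast
  then obtain T where T1: "\<And>u. real (card {x\<in>P. inner u x \<le> T u}) > thr"
    and T2: "\<And>u s. real (card {x\<in>P. inner u x \<le> s}) > thr \<Longrightarrow> T u \<le> s"
    by metis
  define Bad where "Bad u = {x\<in>P. inner u x > T u}" for u
  have cb: "real (card (Bad u)) < real n / real k" for u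
  proof -
    have "P = {x\<in>P. inner u x \<le> T u} \<union> Bad u" by (auto simp: Bad_def)
    moreover have "{x\<in>P. inner u x \<le> T u} \<inter> Bad u = {}" by (auto simp: Bad_def)
    ultimately have "card P = card {x\<in>P. inner u x \<le> T u} + card (Bad u)"
      using assms(5) by (metis card_Un_disjoint finite_Un)
    then have "real (card (Bad u)) = real n - real (card {x\<in>P. inner u x \<le> T u})"
      using assms(6) by simp
    also have "\<dots> < real n - thr" using T1[of u] by simp
    also have "\<dots> = real n / real k" using assms(3) by (simp add: thr_def field_simps)
    finally show ?thesis .
  qed
  have fB: "finite (Bad u)" for u using assms(5) by (simp add: Bad_def)
  have "real (card (\<Union>u\<in>Ors. Bad u)) \<le> real (\<Sum>u\<in>Ors. card (Bad u))"
    using card_UN_le[OF assms(1), of Bad] by linarith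
  also have "\<dots> = (\<Sum>u\<in>Ors. real (card (Bad u)))" by simp
  also have "\<dots> < (\<Sum>u\<in>Ors. real n / real k)"
    using assms(1,2,3) cb by (intro sum_strict_mono) auto
  also have "\<dots> = real n" using assms(2,3) by simp
  finally have "card (\<Union>u\<in>Ors. Bad u) < card P" using assms(6) by simp
  then have "\<not> P \<subseteq> (\<Union>u\<in>Ors. Bad u)"
    using card_mono[of "\<Union>u\<in>Ors. Bad u" P] assms(1) fB by (metis finite_UN_I leD)
  then obtain p where pP: "p \<in> P" and pn: "\<And>u. u \<in> Ors \<Longrightarrow> p \<notin> Bad u" by blast
  show ?thesis
  proof (intro bexI[OF _ pP] ballI impI)
    fix C assume "C \<in> polyhedra_family Ors" and big: "real (card (C \<inter> P)) > (1 - 1 / real k) * real n"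
    then obtain H where fH: "finite H" and Hh: "\<forall>h\<in>H. \<exists>u\<in>Ors. \<exists>t. h = halfspace_with u t"
      and CH: "C = \<Inter>H" unfolding polyhedra_family_def by blast
    show "p \<in> C" unfolding CH
    proof
      fix h assume hH: "h \<in> H"
      then obtain u t where uO: "u \<in> Ors" and ht: "h = halfspace_with u t" using Hh by blast
      have "C \<inter> P \<subseteq> {x\<in>P. inner u x \<le> t}" using hH ht CH by (auto simp: halfspace_with_def)
      then have "card (C \<inter> P) \<le> card {x\<in>P. inner u x \<le> t}"
        using assms(5) by (intro card_mono) auto
      then have "real (card {x\<in>P. inner u x \<le> t}) > thr" using big thr_def by linarith
      then have "T u \<le> t" by (rule T2)
      moreover have "inner u p \<le> T u" using pn[OF uO] pP by (auto simp: Bad_def)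
      ultimately show "p \<in> h" using ht by (simp add: halfspace_with_def)
    qed
  qed
qed

end
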